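(* Let $0<|q|<1$ and let $a,b$ be complex numbers with $aq^j\neq1$ for all integers $j\ge0$. Then \[ \frac{(-bq;q)_\infty\,(abq;q)_\infty}{(-q;q)_\infty\,(a;q)_\infty}=\sum_{k=0}^\infty\frac{(b;q)_k}{(q;q)_k}\,\frac{(ab^2q^{2+k};q^2)_\infty}{(aq^k;q^2)_\infty}\,(-1)^kq^k . \]
   Context: For $0<|q|<1$ and base $p\in\{q,q^2\}$: $(x;p)_\infty=\prod_{j\ge0}(1-xp^j)$ and $(x;p)_k=(x;p)_\infty/(xp^k;p)_\infty$. *)

theory Defs
  imports "HOL-Analysis.Analysis"
begin

definition qpoch_inf :: "complex \<Rightarrow> complex \<Rightarrow> complex" where
  "qpoch_inf x p = (\<Prod>j. 1 - x * p ^ j)"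

definition qpoch :: "complex \<Rightarrow> complex \<Rightarrow> nat \<Rightarrow> complex" where
  "qpoch x p k = (\<Prod>j<k. 1 - x * p ^ j)"

end

theory Submission
  imports Defs "HOL-Complex_Analysis.Complex_Analysis"
begin

lemma qpoch_Suc: "qpoch x p (Suc n) = qpoch x p n * (1 - x * p ^ n)"
  by (simp add: qpoch_def)

lemma qpoch_0 [simp]: "qpoch x p 0 = 1"
  by (simp add: qpoch_def)

lemma qpoch_add: "qpoch x p (k + n) = qpoch x p k * qpoch (x * p ^ k) p n"
  by (induction n) (simp_all add: qpoch_Suc power_add mult_ac)

lemma qpoch_even: "qpoch x p (2 * n) = qpoch x (p^2) n * qpoch (x * p) (p^2) n"
proof (induction n)
  case 0 thus ?case by simp
next
  case (Suc n)
  have e: "(p^2)^n = p^(2*n)" by (simp add: power_mult)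
  have "qpoch x p (2 * Suc n) = qpoch x p (Suc (Suc (2 * n)))" by simp
  also have "\<dots> = qpoch x p (2 * n) * (1 - x * p ^ (2 * n)) * (1 - x * p ^ Suc (2 * n))"
    by (simp only: qpoch_Suc)
  also have "\<dots> = qpoch x (p^2) (Suc n) * qpoch (x * p) (p^2) (Suc n)"
    by (simp only: qpoch_Suc Suc.IH e power_Suc) (simp only: mult_ac)
  finally show ?case .
qed

lemma qpoch_sq: "qpoch (x^2) (p^2) n = qpoch x p n * qpoch (-x) p n"
proof -
  have "qpoch x p n * qpoch (-x) p n = (\<Prod>j<n. (1 - x * p ^ j) * (1 - (-x) * p ^ j))"
    unfolding qpoch_def by (rule prod.distrib[symmetric])
  also have "\<dots> = (\<Prod>j<n. 1 - x^2 * (p^2) ^ j)"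
  proof (rule prod.cong)
    fix j
    have "(p^2)^j = p^j * p^j" by (simp add: power_mult[symmetric] mult_2_right power_add mult.commute)
    thus "(1 - x * p ^ j) * (1 - (-x) * p ^ j) = 1 - x^2 * (p^2) ^ j"
      by (simp add: power2_eq_square algebra_simps)
  qed simp
  finally show ?thesis by (simp add: qpoch_def)
qed

lemma qpi_conv:
  fixes x p :: complex assumes "norm p < 1" shows "convergent_prod (\<lambda>j. 1 - x * p ^ j)"
proof -
  have "summable (\<lambda>j. norm x * norm p ^ j)"
    using assms by (intro summable_mult summable_geometric) auto
  moreover have "(\<lambda>j. norm ((1 - x * p ^ j) - 1)) = (\<lambda>j. norm x * norm p ^ j)"
    by (simp add: norm_mult norm_power)
  ultimately have "summable (\<lambda>j. norm ((1 - x * p ^ j) - 1))"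
    by simp
  thus ?thesis
    by (intro abs_convergent_prod_imp_convergent_prod summable_imp_abs_convergent_prod)
qed

lemma qpi_lim:
  assumes "norm p < 1" shows "(\<lambda>n. qpoch x p n) \<longlonglongrightarrow> qpoch_inf x p"
  using convergent_prod_LIMSEQ[OF qpi_conv[OF assms, of x]]
  unfolding qpoch_def qpoch_inf_def LIMSEQ_lessThan_iff_atMost by (simp only: LIMSEQ_lessThan_iff_atMost)

lemma qpi_shift:
  assumes "norm p < 1" shows "qpoch_inf x p = qpoch x p k * qpoch_inf (x * p ^ k) p"
proof -
  have "(\<lambda>n. qpoch x p (n + k)) \<longlonglongrightarrow> qpoch_inf x p"
    using LIMSEQ_ignore_initial_segment[OF qpi_lim[OF assms]] .
  moreover have "(\<lambda>n. qpoch x p (n + k)) \<longlonglongrightarrow> qpoch x p k * qpoch_inf (x * p ^ k) p"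
    by (subst add.commute, subst qpoch_add) (intro tendsto_mult tendsto_const qpi_lim assms)
  ultimately show ?thesis by (rule LIMSEQ_unique)
qed

lemma qpi_even:
  assumes "norm p < 1" shows "qpoch_inf x p = qpoch_inf x (p^2) * qpoch_inf (x * p) (p^2)"
proof -
  have p2: "norm (p^2) < 1" using assms
    by (simp add: norm_power power_less_one_iff abs_square_less_1)
  have "filterlim (\<lambda>n::nat. 2 * n) sequentially sequentially"
    by (intro filterlim_subseq) (auto simp: strict_mono_def)
  hence "(\<lambda>n. qpoch x p (2 * n)) \<longlonglongrightarrow> qpoch_inf x p"
    using filterlim_compose[OF qpi_lim[OF assms]] by blast
  moreover have "(\<lambda>n. qpoch x p (2 * n)) \<longlonglongrightarrow> qpoch_inf x (p^2) * qpoch_inf (x * p) (p^2)"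
    unfolding qpoch_even by (intro tendsto_mult qpi_lim p2)
  ultimately show ?thesis by (rule LIMSEQ_unique)
qed

lemma qpi_nonzero:
  assumes "norm p < 1" "\<And>j. x * p ^ j \<noteq> 1" shows "qpoch_inf x p \<noteq> 0"
  unfolding qpoch_inf_def using assms by (intro prodinf_nonzero qpi_conv) auto

lemma geom_partial_le:
  fixes r :: real assumes "0 \<le> r" "r < 1" shows "(\<Sum>j<n. r ^ j) \<le> 1 / (1 - r)"
proof -
  have "(\<Sum>j<n. r ^ j) \<le> (\<Sum>j. r ^ j)"
    using assms by (intro sum_le_suminf summable_geometric) auto
  also have "\<dots> = 1 / (1 - r)" using assms by (simp add: suminf_geometric)
  finally show ?thesis .
qed

lemma qpoch_bound:
  assumes "norm p < 1" shows "norm (qpoch x p n) \<le> exp (norm x / (1 - norm p))"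
proof -
  have "norm (qpoch x p n) = (\<Prod>j<n. norm (1 - x * p ^ j))"
    by (simp add: qpoch_def prod_norm)
  also have "\<dots> \<le> (\<Prod>j<n. 1 + norm x * norm p ^ j)"
    by (intro prod_mono conjI norm_ge_zero)
       (metis norm_one norm_mult norm_power norm_triangle_ineq4)
  also have "\<dots> \<le> exp (\<Sum>j<n. norm x * norm p ^ j)"
    by (intro prod_le_exp_sum) auto
  finally have 1: "norm (qpoch x p n) \<le> exp (\<Sum>j<n. norm x * norm p ^ j)" .
  have "(\<Sum>j<n. norm x * norm p ^ j) = norm x * (\<Sum>j<n. norm p ^ j)"
    by (simp add: sum_distrib_left)
  also have "\<dots> \<le> norm x * (1 / (1 - norm p))"
    by (intro mult_left_mono geom_partial_le assms) auto
  finally have 2: "(\<Sum>j<n. norm x * norm p ^ j) \<le> norm x / (1 - norm p)" by simp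
  show ?thesis using 1 2 by (meson exp_le_cancel_iff order_trans)
qed

lemma qpi_bound:
  assumes "norm p < 1" shows "norm (qpoch_inf x p) \<le> exp (norm x / (1 - norm p))"
  by (rule LIMSEQ_le_const2[OF tendsto_norm[OF qpi_lim[OF assms]]]) (use qpoch_bound[OF assms] in auto)

lemma qpoch_lower:
  assumes "norm p < 1" shows "\<exists>d>0. \<forall>n. norm (qpoch p p n) \<ge> d"
proof -
  define E where "E = exp (1 / (1 - norm p))"
  have E: "E > 0" by (simp add: E_def)
  have nz: "qpoch_inf p p \<noteq> 0"
  proof (rule qpi_nonzero[OF assms])
    fix j
    have "norm (p * p ^ j) < 1" using assms
      by (metis norm_power power_Suc power_less_one_iff norm_ge_zero zero_less_Suc)
    thus "p * p ^ j \<noteq> 1" by auto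
  qed
  have "norm (qpoch p p n) \<ge> norm (qpoch_inf p p) / E" for n
  proof -
    have "norm (p * p ^ n) \<le> 1" using assms
      by (simp add: norm_mult norm_power power_le_one mult_le_one)
    moreover have "1 - norm p > 0" using assms by simp
    ultimately have "norm (p * p ^ n) / (1 - norm p) \<le> 1 / (1 - norm p)"
      by (intro divide_right_mono) auto
    hence "exp (norm (p * p ^ n) / (1 - norm p)) \<le> E"
      unfolding E_def by simp
    hence "norm (qpoch_inf (p * p ^ n) p) \<le> E"
      using qpi_bound[OF assms, of "p * p ^ n"] by linarith
    hence "norm (qpoch_inf p p) \<le> norm (qpoch p p n) * E"
      by (subst qpi_shift[OF assms, of p n]) (simp add: norm_mult mult_left_mono)
    thus ?thesis using E by (simp add: field_simps)
  qed
  moreover have "norm (qpoch_inf p p) / E > 0" using nz E by simp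
  ultimately show ?thesis by blast
qed

lemma coef_bound:
  assumes "norm p < 1" shows "\<exists>M. \<forall>n. norm (qpoch c p n / qpoch p p n) \<le> M"
proof -
  obtain d where d: "d > 0" "\<And>n. norm (qpoch p p n) \<ge> d" using qpoch_lower[OF assms] by blast
  have "norm (qpoch c p n / qpoch p p n) \<le> exp (norm c / (1 - norm p)) / d" for n
    unfolding norm_divide using d(1) d(2)[of n] qpoch_bound[OF assms, of c n]
    by (intro frac_le) auto
  thus ?thesis by blast
qed

lemma norm_lt1_mult: "norm (u::complex) < 1 \<Longrightarrow> norm (v::complex) \<le> 1 \<Longrightarrow> norm (u * v) < 1"
proof -
  assume a: "norm u < 1" "norm v \<le> 1"
  have "norm u * norm v \<le> norm u" by (rule mult_left_le) (use a in auto)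
  thus ?thesis using a by (simp add: norm_mult)
qed

lemma norm_pow_le1: "norm (p::complex) < 1 \<Longrightarrow> norm (p ^ n) \<le> 1"
  by (simp add: norm_power power_le_one)

lemma qpoch_pp_nonzero:
  assumes "norm p < 1" shows "qpoch p p n \<noteq> 0"
  using qpoch_lower[OF assms] by (metis norm_zero not_less)

lemma qbinom:
  fixes c p z :: complex
  assumes p: "norm p < 1" and z: "norm z < 1"
  shows "(\<lambda>n. qpoch c p n / qpoch p p n * z ^ n) sums (qpoch_inf (c * z) p / qpoch_inf z p)"
proof -
  define A where "A n = qpoch c p n / qpoch p p n" for n
  obtain M where M: "\<And>n. norm (A n) \<le> M" using coef_bound[OF p, of c] unfolding A_def by blast
  define f where "f w = (\<Sum>n. A n * w ^ n)" for w
  have summ: "summable (\<lambda>n. norm (A n * w ^ n))" if w: "norm w < 1" for w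
  proof (rule summable_comparison_test)
    show "\<exists>N. \<forall>n\<ge>N. norm (norm (A n * w ^ n)) \<le> M * norm w ^ n"
    proof (intro exI allI impI)
      fix n :: nat
      have "norm (A n) * norm w ^ n \<le> M * norm w ^ n"
        by (rule mult_right_mono[OF M]) simp
      thus "norm (norm (A n * w ^ n)) \<le> M * norm w ^ n" by (simp add: norm_mult norm_power)
    qed
    show "summable (\<lambda>n. M * norm w ^ n)" using w by (intro summable_mult summable_geometric) auto
  qed
  have sums: "(\<lambda>n. A n * w ^ n) sums f w" if "norm w < 1" for w
    unfolding f_def by (rule summable_sums[OF summable_norm_cancel[OF summ[OF that]]])
  have A0: "A 0 = 1" by (simp add: A_def)
  have Arec: "A (Suc n) * (1 - p ^ Suc n) = A n * (1 - c * p ^ n)" for n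
  proof -
    have "qpoch p p (Suc n) \<noteq> 0" by (rule qpoch_pp_nonzero[OF p])
    hence "1 - p ^ Suc n \<noteq> 0" by (simp add: qpoch_Suc)
    thus ?thesis using qpoch_pp_nonzero[OF p, of n]
      by (simp add: A_def qpoch_Suc field_simps)
  qed
  have FE: "(1 - w) * f w = (1 - c * w) * f (p * w)" if w: "norm w < 1" for w
  proof -
    have pw: "norm (p * w) < 1"
      using norm_lt1_mult[OF w, of p] p by (simp add: mult.commute)
    have g: "(\<lambda>n. A n * (1 - p ^ n) * w ^ n) sums (f w - f (p * w))"
      using sums_diff[OF sums[OF w] sums[OF pw]] by (simp add: algebra_simps power_mult_distrib)
    have h: "(\<lambda>n. w * (A n * (1 - c * p ^ n) * w ^ n)) sums (w * (f w - c * f (p * w)))"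
      using sums_mult[OF sums_diff[OF sums[OF w] sums_mult[OF sums[OF pw], of c]], of w]
      by (simp add: algebra_simps power_mult_distrib)
    have "(\<lambda>n. A (Suc n) * (1 - p ^ Suc n) * w ^ Suc n) = (\<lambda>n. w * (A n * (1 - c * p ^ n) * w ^ n))"
      using Arec by (simp add: mult_ac)
    with h have "(\<lambda>n. A (Suc n) * (1 - p ^ Suc n) * w ^ Suc n) sums (w * (f w - c * f (p * w)))"
      by simp
    hence "(\<lambda>n. A n * (1 - p ^ n) * w ^ n) sums (w * (f w - c * f (p * w)) + 0)"
      by (subst (asm) sums_Suc_iff) simp
    with g have "f w - f (p * w) = w * (f w - c * f (p * w))"
      using sums_unique2 by force
    thus ?thesis by (simp add: algebra_simps)
  qed
  have iter: "f z * qpoch z p N = qpoch (c * z) p N * f (z * p ^ N)" for N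
  proof (induction N)
    case 0 thus ?case by simp
  next
    case (Suc N)
    have u: "norm (z * p ^ N) < 1" by (rule norm_lt1_mult[OF z norm_pow_le1[OF p]])
    have "f z * qpoch z p (Suc N) = qpoch (c * z) p N * ((1 - z * p ^ N) * f (z * p ^ N))"
      using Suc by (simp add: qpoch_Suc mult_ac)
    also have "\<dots> = qpoch (c * z) p N * ((1 - c * (z * p ^ N)) * f (p * (z * p ^ N)))"
      by (subst FE[OF u]) simp
    also have "\<dots> = qpoch (c * z) p (Suc N) * f (z * p ^ Suc N)"
      by (simp add: qpoch_Suc mult_ac)
    finally show ?case .
  qed
  have "isCont f 0"
  proof -
    have "summable (\<lambda>n. A n * (1/2) ^ n)"
      by (rule summable_norm_cancel[OF summ]) simp
    thus ?thesis unfolding f_def by (rule isCont_powser) simp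
  qed
  moreover have "(\<lambda>N. z * p ^ N) \<longlonglongrightarrow> 0"
    using p by (intro tendsto_mult_right_zero LIMSEQ_power_zero) simp
  ultimately have "(\<lambda>N. f (z * p ^ N)) \<longlonglongrightarrow> f 0"
    by (rule isCont_tendsto_compose)
  moreover have "f 0 = 1" unfolding f_def using A0 by (simp add: powser_zero)
  ultimately have f1: "(\<lambda>N. f (z * p ^ N)) \<longlonglongrightarrow> 1" by simp
  have l1: "(\<lambda>N. qpoch (c * z) p N * f (z * p ^ N)) \<longlonglongrightarrow> qpoch_inf (c * z) p * 1"
    by (rule tendsto_mult[OF qpi_lim[OF p] f1])
  have l2: "(\<lambda>N. f z * qpoch z p N) \<longlonglongrightarrow> f z * qpoch_inf z p"
    by (rule tendsto_mult[OF tendsto_const qpi_lim[OF p]])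
  have "(\<lambda>N. f z * qpoch z p N) = (\<lambda>N. qpoch (c * z) p N * f (z * p ^ N))"
    by (rule ext) (rule iter)
  with l2 have l3: "(\<lambda>N. qpoch (c * z) p N * f (z * p ^ N)) \<longlonglongrightarrow> f z * qpoch_inf z p" by simp
  have eq: "f z * qpoch_inf z p = qpoch_inf (c * z) p"
    using LIMSEQ_unique[OF l3 l1] by simp
  have "qpoch_inf z p \<noteq> 0"
  proof (rule qpi_nonzero[OF p])
    fix j show "z * p ^ j \<noteq> 1" using norm_lt1_mult[OF z norm_pow_le1[OF p, of j]] by auto
  qed
  hence "f z = qpoch_inf (c * z) p / qpoch_inf z p" using eq by (simp add: field_simps)
  thus ?thesis using sums[OF z] unfolding A_def by simp
qed

lemma fiber_sums:
  fixes f :: "nat \<Rightarrow> nat \<Rightarrow> complex"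
  assumes T: "((\<lambda>(x, y). f x y) has_sum T) (UNIV \<times> UNIV)"
    and F: "\<And>x. f x sums F x"
  shows "F sums T"
proof -
  have "((\<lambda>y. f x y) has_sum F x) UNIV" for x
  proof -
    have "f x summable_on UNIV"
      by (rule summable_on_SigmaD1[OF has_sum_imp_summable[OF T]]) simp
    hence "(f x has_sum infsum (f x) UNIV) UNIV" by (simp add: summable_iff_has_sum_infsum)
    moreover from this have "f x sums infsum (f x) UNIV" by (rule has_sum_imp_sums)
    hence "infsum (f x) UNIV = F x" using F sums_unique2 by blast
    ultimately show ?thesis by simp
  qed
  hence "(F has_sum T) UNIV"
    by (intro has_sum_Sigma'[OF T]) simp
  thus ?thesis by (rule has_sum_imp_sums)
qed

lemma fubini_nat:
  fixes f :: "nat \<Rightarrow> nat \<Rightarrow> complex" and g :: "nat \<Rightarrow> nat \<Rightarrow> real"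
  assumes bound: "\<And>k n. norm (f k n) \<le> g k n"
    and gs: "\<And>k. (\<lambda>n. g k n) sums G k" and Gs: "summable G"
    and Fk: "\<And>k. (\<lambda>n. f k n) sums F k"
    and Hn: "\<And>n. (\<lambda>k. f k n) sums H n"
    and HS: "H sums S"
  shows "F sums S"
proof -
  have gnn: "g k n \<ge> 0" for k n by (rule order_trans[OF norm_ge_zero bound])
  have Gnn: "G k \<ge> 0" for k by (rule sums_le[OF _ sums_zero gs]) (use gnn in auto)
  have gh: "((\<lambda>n. g k n) has_sum G k) UNIV" for k
    by (rule sums_nonneg_imp_has_sum[OF gs]) (use gnn in auto)
  have Gh: "G summable_on UNIV"
    using sums_nonneg_imp_has_sum[OF summable_sums[OF Gs]] Gnn has_sum_imp_summable by blast
  have gsum: "(\<lambda>(k, n). g k n) summable_on Sigma UNIV (\<lambda>_. UNIV)"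
    by (rule summable_on_SigmaI[where g = G]) (use gh Gh gnn in auto)
  have fabs: "(\<lambda>x. norm ((\<lambda>(k, n). f k n) x)) summable_on Sigma UNIV (\<lambda>_. UNIV)"
  proof (rule Infinite_Sum.abs_summable_on_comparison_test)
    have "(\<lambda>x. norm ((\<lambda>(k, n). g k n) x)) = (\<lambda>(k, n). g k n)"
      using gnn by (auto simp: case_prod_unfold)
    thus "(\<lambda>x. norm ((\<lambda>(k, n). g k n) x)) summable_on Sigma UNIV (\<lambda>_. UNIV)"
      using gsum by simp
    show "norm ((\<lambda>(k, n). f k n) x) \<le> norm ((\<lambda>(k, n). g k n) x)" for x
      using bound gnn by (auto simp: case_prod_unfold)
  qed
  then obtain T where T: "((\<lambda>(k, n). f k n) has_sum T) (UNIV \<times> UNIV)"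
    using abs_summable_summable summable_on_def by blast
  have FT: "F sums T" by (rule fiber_sums[OF T]) (use Fk in simp)
  have T': "((\<lambda>(n, k). f k n) has_sum T) (UNIV \<times> UNIV)"
    using T by (subst (asm) has_sum_swap) (simp add: case_prod_unfold)
  have "H sums T" by (rule fiber_sums[where f = "\<lambda>n k. f k n", OF T']) (use Hn in simp)
  with HS have "S = T" using sums_unique2 by blast
  with FT show ?thesis by simp
qed

lemma norm_q2: "norm (q::complex) < 1 \<Longrightarrow> norm (q^2) < 1"
  by (simp add: norm_power abs_square_less_1)

lemma norm_powSuc_lt1:
  assumes "norm (q::complex) < 1" shows "norm (q^(n+1)) < 1" "norm (-(q^(n+1))) < 1"
proof -
  have "norm (q * q^n) < 1" by (rule norm_lt1_mult[OF assms norm_pow_le1[OF assms]])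
  thus "norm (q^(n+1)) < 1" "norm (-(q^(n+1))) < 1" by simp_all
qed

lemma qpi_nonzero_small:
  assumes "norm p < 1" "norm x < 1" shows "qpoch_inf x p \<noteq> 0"
proof (rule qpi_nonzero[OF assms(1)])
  fix j show "x * p ^ j \<noteq> 1" using norm_lt1_mult[OF assms(2) norm_pow_le1[OF assms(1), of j]] by auto
qed

lemma qpoch_nonzero_small:
  assumes "norm p < 1" "norm x < 1" shows "qpoch x p n \<noteq> 0"
  using qpi_nonzero_small[OF assms] qpi_shift[OF assms(1), of x n] by auto

lemma small_a:
  fixes q a b :: complex
  assumes q: "norm q < 1" and a: "norm a < 1"
  shows "(\<lambda>k. qpoch b q k / qpoch q q k
            * (qpoch_inf (a * b\<^sup>2 * q ^ (2 + k)) (q\<^sup>2) / qpoch_inf (a * q ^ k) (q\<^sup>2))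
            * (-1) ^ k * q ^ k)
         sums (qpoch_inf (- b * q) q * qpoch_inf (a * b * q) q
               / (qpoch_inf (- q) q * qpoch_inf a q))"
proof -
  have q2: "norm (q^2) < 1" by (rule norm_q2[OF q])
  define C where "C k = qpoch b q k / qpoch q q k" for k
  define B where "B n = qpoch ((b*q)^2) (q^2) n / qpoch (q^2) (q^2) n" for n
  define f where "f k n = C k * (-1)^k * q^k * (B n * (a * q^k)^n)" for k n
  obtain Mc where Mc: "\<And>k. norm (C k) \<le> Mc" using coef_bound[OF q, of b] unfolding C_def by blast
  obtain Mb where Mb: "\<And>n. norm (B n) \<le> Mb" using coef_bound[OF q2, of "(b*q)^2"] unfolding B_def by blast
  have Mc0: "Mc \<ge> 0" using Mc[of 0] norm_ge_zero order_trans by blast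
  have Mb0: "Mb \<ge> 0" using Mb[of 0] norm_ge_zero order_trans by blast
  define g where "g k n = Mc * Mb * norm q ^ k * norm a ^ n" for k n
  define G where "G k = Mc * Mb * norm q ^ k * (1 / (1 - norm a))" for k
  have bound: "norm (f k n) \<le> g k n" for k n
  proof -
    have "norm ((a * q^k)^n) = norm a ^ n * (norm q ^ k) ^ n" by (simp add: norm_mult norm_power power_mult_distrib)
    also have "\<dots> \<le> norm a ^ n * 1"
      by (intro mult_left_mono power_le_one) (use q in \<open>auto simp: power_le_one\<close>)
    finally have 1: "norm ((a * q^k)^n) \<le> norm a ^ n" by simp
    have "norm (f k n) = norm (C k) * norm q ^ k * (norm (B n) * norm ((a * q^k)^n))"
      by (simp add: f_def norm_mult norm_power)
    also have "\<dots> \<le> Mc * norm q ^ k * (Mb * norm a ^ n)"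
      by (intro mult_mono Mc Mb 1 mult_nonneg_nonneg) (auto simp: Mc0 Mb0)
    finally show ?thesis by (simp add: g_def mult_ac)
  qed
  have gs: "(\<lambda>n. g k n) sums G k" for k
    unfolding g_def G_def using a by (intro sums_mult geometric_sums) auto
  have Gs: "summable G"
    unfolding G_def using q by (intro summable_mult2 summable_mult summable_geometric) auto
  define F where "F k = qpoch b q k / qpoch q q k
            * (qpoch_inf (a * b\<^sup>2 * q ^ (2 + k)) (q\<^sup>2) / qpoch_inf (a * q ^ k) (q\<^sup>2))
            * (-1) ^ k * q ^ k" for k
  have Fk: "(\<lambda>n. f k n) sums F k" for k
  proof -
    have z: "norm (a * q^k) < 1" by (rule norm_lt1_mult[OF a norm_pow_le1[OF q]])
    have "(\<lambda>n. B n * (a * q^k)^n) sums (qpoch_inf ((b*q)^2 * (a * q^k)) (q^2) / qpoch_inf (a * q^k) (q^2))"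
      unfolding B_def by (rule qbinom[OF q2 z])
    also have "(b*q)^2 * (a * q^k) = a * b\<^sup>2 * q ^ (2 + k)"
      by (simp add: power_add power_mult_distrib power2_eq_square mult_ac)
    finally have "(\<lambda>n. C k * (-1)^k * q^k * (B n * (a * q^k)^n)) sums
        (C k * (-1)^k * q^k * (qpoch_inf (a * b\<^sup>2 * q ^ (2 + k)) (q^2) / qpoch_inf (a * q^k) (q^2)))"
      by (rule sums_mult)
    thus ?thesis by (simp add: f_def F_def C_def mult_ac)
  qed
  define H where "H n = B n * a^n * (qpoch_inf (b * (-(q^(n+1)))) q / qpoch_inf (-(q^(n+1))) q)" for n
  have Hn: "(\<lambda>k. f k n) sums H n" for n
  proof -
    have z: "norm (-(q^(n+1))) < 1" by (rule norm_powSuc_lt1[OF q])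
    have "(\<lambda>k. C k * (-(q^(n+1)))^k) sums (qpoch_inf (b * (-(q^(n+1)))) q / qpoch_inf (-(q^(n+1))) q)"
      unfolding C_def by (rule qbinom[OF q z])
    hence "(\<lambda>k. B n * a^n * (C k * (-(q^(n+1)))^k)) sums H n"
      unfolding H_def by (rule sums_mult)
    moreover have "B n * a^n * (C k * (-(q^(n+1)))^k) = f k n" for k
    proof -
      have "(q^(n+1))^k = q^((n+1)*k)" by (rule power_mult[symmetric])
      also have "(n+1)*k = k + k*n" by simp
      also have "q^(k + k*n) = q^k * (q^k)^n" by (simp only: power_add power_mult)
      finally have e0: "(q^(n+1))^k = q^k * (q^k)^n" .
      have "(-(q^(n+1)))^k = (-1)^k * (q^(n+1))^k" by (rule power_minus)
      hence e: "(-(q^(n+1)))^k = (-1)^k * (q^k * (q^k)^n)" by (simp only: e0)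
      have e2: "(a * q^k)^n = a^n * (q^k)^n" by (rule power_mult_distrib)
      show ?thesis unfolding f_def e e2 by (simp only: mult_ac)
    qed
    ultimately show ?thesis by simp
  qed
  define K where "K = qpoch_inf (- b * q) q / qpoch_inf (- q) q"
  define D where "D n = qpoch (b*q) q n / qpoch q q n" for n
  have HK: "H n = K * (D n * a^n)" for n
  proof -
    have nq: "norm (-q) < 1" using q by simp
    have s1: "qpoch_inf (- b * q) q = qpoch (- b * q) q n * qpoch_inf (b * (-(q^(n+1)))) q"
      using qpi_shift[OF q, of "- b * q" n] by (simp add: mult_ac)
    have s2: "qpoch_inf (- q) q = qpoch (- q) q n * qpoch_inf (-(q^(n+1))) q"
      using qpi_shift[OF q, of "- q" n] by (simp add: mult_ac)
    have n1: "qpoch_inf (-(q^(n+1))) q \<noteq> 0"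
      by (rule qpi_nonzero_small[OF q norm_powSuc_lt1(2)[OF q]])
    have n2: "qpoch (- q) q n \<noteq> 0" by (rule qpoch_nonzero_small[OF q nq])
    have n3: "qpoch q q n \<noteq> 0" by (rule qpoch_nonzero_small[OF q q])
    have sq1: "qpoch ((b*q)^2) (q^2) n = qpoch (b*q) q n * qpoch (- b * q) q n"
      using qpoch_sq[of "b*q" q n] by simp
    have sq2: "qpoch (q^2) (q^2) n = qpoch q q n * qpoch (- q) q n"
      using qpoch_sq[of q q n] by simp
    show ?thesis
      unfolding H_def K_def D_def B_def sq1 sq2 s1 s2 using n1 n2 n3
      by (simp add: field_simps)
  qed
  have "(\<lambda>n. D n * a^n) sums (qpoch_inf ((b*q) * a) q / qpoch_inf a q)"
    unfolding D_def by (rule qbinom[OF q a])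
  hence "(\<lambda>n. K * (D n * a^n)) sums (K * (qpoch_inf ((b*q) * a) q / qpoch_inf a q))"
    by (rule sums_mult)
  hence HS: "H sums (qpoch_inf (- b * q) q * qpoch_inf (a * b * q) q / (qpoch_inf (- q) q * qpoch_inf a q))"
    unfolding HK K_def by (simp add: mult_ac)
  have "F sums (qpoch_inf (- b * q) q * qpoch_inf (a * b * q) q / (qpoch_inf (- q) q * qpoch_inf a q))"
    by (rule fubini_nat[OF bound gs Gs Fk Hn HS])
  thus ?thesis unfolding F_def .
qed

lemma hol_lim:
  fixes F :: "nat \<Rightarrow> complex \<Rightarrow> complex"
  assumes hol: "\<And>n. F n holomorphic_on UNIV"
    and uc: "\<And>x. uniformly_convergent_on (cball x 1) F"
    and lim: "\<And>z. (\<lambda>n. F n z) \<longlonglongrightarrow> g z"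
  shows "g holomorphic_on UNIV"
proof (rule holomorphic_uniform_sequence[OF open_UNIV hol])
  fix x :: complex
  have "uniform_limit (cball x 1) F (\<lambda>z. lim (\<lambda>n. F n z)) sequentially"
    using uc[of x] by (simp add: uniformly_convergent_uniform_limit_iff)
  moreover have "(\<lambda>z. lim (\<lambda>n. F n z)) = g" using lim by (intro ext limI)
  ultimately have "uniform_limit (cball x 1) F g sequentially" by simp
  thus "\<exists>d>0. cball x d \<subseteq> UNIV \<and> uniform_limit (cball x d) F g sequentially"
    by (intro exI[of _ 1]) auto
qed

lemma qpi_bound': "norm p < 1 \<Longrightarrow> norm y \<le> Y \<Longrightarrow> norm (qpoch_inf y p) \<le> exp (Y / (1 - norm p))"
  by (rule order_trans[OF qpi_bound]) (auto intro!: divide_right_mono)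

lemma qpoch_bound': "norm p < 1 \<Longrightarrow> norm y \<le> Y \<Longrightarrow> norm (qpoch y p n) \<le> exp (Y / (1 - norm p))"
  by (rule order_trans[OF qpoch_bound]) (auto intro!: divide_right_mono)

lemma cball_norm: "a \<in> cball (x::complex) 1 \<Longrightarrow> norm a \<le> norm x + 1"
  by (metis dist_norm mem_cball norm_triangle_sub order_trans add_mono order_refl dist_commute)

lemma qpi_holo:
  assumes p: "norm p < 1" shows "(\<lambda>a. qpoch_inf (c * a) p) holomorphic_on UNIV"
proof (rule hol_lim[where F = "\<lambda>n a. qpoch (c * a) p n"])
  show "(\<lambda>a. qpoch (c * a) p n) holomorphic_on UNIV" for n
    unfolding qpoch_def by (intro holomorphic_intros)
  show "(\<lambda>n. qpoch (c * z) p n) \<longlonglongrightarrow> qpoch_inf (c * z) p" for z by (rule qpi_lim[OF p])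
  fix x :: complex
  have "uniformly_convergent_on (cball x 1) (\<lambda>N a. \<Prod>n<N. 1 - c * a * p ^ n)"
  proof (rule uniformly_convergent_on_prod')
    show "continuous_on (cball x 1) (\<lambda>a. 1 - c * a * p ^ n)" for n by (intro continuous_intros)
    show "compact (cball x 1)" by simp
    show "uniformly_convergent_on (cball x 1) (\<lambda>N a. \<Sum>n<N. norm (1 - c * a * p ^ n - 1))"
    proof (rule Weierstrass_m_test')
      show "summable (\<lambda>n. norm c * (norm x + 1) * norm p ^ n)"
        using p by (intro summable_mult summable_geometric) auto
      fix n a assume "a \<in> cball x 1"
      hence "norm a \<le> norm x + 1" by (rule cball_norm)
      thus "norm (norm (1 - c * a * p ^ n - 1)) \<le> norm c * (norm x + 1) * norm p ^ n"
        by (simp add: norm_mult norm_power mult_right_mono mult_left_mono)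
    qed
  qed
  thus "uniformly_convergent_on (cball x 1) (\<lambda>n a. qpoch (c * a) p n)"
    unfolding qpoch_def .
qed

lemma fact3:
  assumes q: "norm q < 1"
  shows "qpoch_inf a q = qpoch a q k * qpoch_inf (a * q ^ k) (q^2) * qpoch_inf (q ^ (k+1) * a) (q^2)"
proof -
  have "qpoch_inf (a * q ^ k) q = qpoch_inf (a * q ^ k) (q^2) * qpoch_inf (a * q ^ k * q) (q^2)"
    by (rule qpi_even[OF q])
  moreover have "a * q ^ k * q = q ^ (k+1) * a" by (simp add: mult_ac)
  ultimately show ?thesis using qpi_shift[OF q, of a k] by (simp add: mult_ac)
qed

lemma term_rel:
  assumes q: "norm q < 1" and n1: "qpoch_inf a q \<noteq> 0" and n2: "qpoch_inf (a * q ^ k) (q^2) \<noteq> 0"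
  shows "Ck * (qpoch_inf (a * b\<^sup>2 * q ^ (2 + k)) (q\<^sup>2) / qpoch_inf (a * q ^ k) (q\<^sup>2)) * (-1) ^ k * q ^ k
       = Ck * (-1)^k * q^k * (qpoch a q k * qpoch_inf (q^(k+1) * a) (q^2) * qpoch_inf (b^2 * q^(2+k) * a) (q^2))
         / qpoch_inf a q"
proof -
  have e: "a * b\<^sup>2 * q ^ (2 + k) = b^2 * q^(2+k) * a" by (simp add: mult_ac)
  have f: "qpoch_inf a q = qpoch a q k * qpoch_inf (a * q ^ k) (q^2) * qpoch_inf (q ^ (k+1) * a) (q^2)"
    by (rule fact3[OF q])
  from n1 f have n3: "qpoch a q k \<noteq> 0" "qpoch_inf (q ^ (k+1) * a) (q^2) \<noteq> 0" by auto
  show ?thesis unfolding e using n2 n3 by (subst f) (simp add: field_simps)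
qed

theorem mainTheorem3:
  fixes q a b :: complex
  assumes "0 < norm q" and "norm q < 1"
    and "\<And>j::nat. a * q ^ j \<noteq> 1"
  shows "(\<lambda>k. qpoch b q k / qpoch q q k
            * (qpoch_inf (a * b\<^sup>2 * q ^ (2 + k)) (q\<^sup>2) / qpoch_inf (a * q ^ k) (q\<^sup>2))
            * (-1) ^ k * q ^ k)
         sums (qpoch_inf (- b * q) q * qpoch_inf (a * b * q) q
               / (qpoch_inf (- q) q * qpoch_inf a q))"
proof -
  have q: "norm q < 1" by fact
  have q2: "norm (q^2) < 1" by (rule norm_q2[OF q])
  define C where "C k = qpoch b q k / qpoch q q k" for k
  obtain Mc where Mc: "\<And>k. norm (C k) \<le> Mc" using coef_bound[OF q, of b] unfolding C_def by blast
  have Mc0: "Mc \<ge> 0" using Mc[of 0] norm_ge_zero order_trans by blast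
  define T where "T a k = C k * (-1)^k * q^k * (qpoch a q k * qpoch_inf (q^(k+1) * a) (q^2)
      * qpoch_inf (b^2 * q^(2+k) * a) (q^2))" for a k
  define Rf where "Rf a = qpoch_inf (- b * q) q * qpoch_inf ((b * q) * a) q / qpoch_inf (- q) q" for a
  define Mf where "Mf R = Mc * (exp (R / (1 - norm q)) * exp (R / (1 - norm (q^2)))
      * exp (norm b ^ 2 * R / (1 - norm (q^2))))" for R
  have Tb: "norm (T a k) \<le> Mf R * norm q ^ k" if aR: "norm a \<le> R" for a R k
  proof -
    have q0: "0 \<le> norm q" "norm q \<le> 1" using q by auto
    have qk: "norm q ^ k \<le> 1" "norm q ^ (k+1) \<le> 1" by (rule power_le_one[OF q0])+
    have b1: "norm (qpoch a q k) \<le> exp (R / (1 - norm q))"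
      by (rule qpoch_bound'[OF q aR])
    have "norm (q^(k+1) * a) \<le> R"
      using mult_mono[OF qk(2) aR] by (simp add: norm_mult norm_power)
    hence b2: "norm (qpoch_inf (q^(k+1) * a) (q^2)) \<le> exp (R / (1 - norm (q^2)))"
      by (rule qpi_bound'[OF q2])
    have h1: "norm (q^(2+k)) \<le> 1" by (rule norm_pow_le1[OF q])
    have h2: "norm (q^(2+k)) * norm a \<le> 1 * R"
      by (rule mult_mono[OF h1 aR]) auto
    have "norm (b^2 * q^(2+k) * a) = norm b ^ 2 * (norm (q^(2+k)) * norm a)"
      by (simp add: norm_mult norm_power)
    also have "\<dots> \<le> norm b ^ 2 * (1 * R)"
      by (rule mult_left_mono[OF h2]) simp
    finally have "norm (b^2 * q^(2+k) * a) \<le> norm b ^ 2 * R" by simp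
    hence b3: "norm (qpoch_inf (b^2 * q^(2+k) * a) (q^2)) \<le> exp (norm b ^ 2 * R / (1 - norm (q^2)))"
      by (rule qpi_bound'[OF q2])
    have "norm (T a k) = norm (C k) * norm q ^ k * (norm (qpoch a q k) * norm (qpoch_inf (q^(k+1) * a) (q^2))
        * norm (qpoch_inf (b^2 * q^(2+k) * a) (q^2)))"
      by (simp add: T_def norm_mult norm_power)
    also have "\<dots> \<le> Mc * norm q ^ k * (exp (R / (1 - norm q)) * exp (R / (1 - norm (q^2)))
      * exp (norm b ^ 2 * R / (1 - norm (q^2))))"
      by (intro mult_mono Mc b1 b2 b3 order_refl mult_nonneg_nonneg) (auto simp: Mc0)
    finally show ?thesis by (simp add: Mf_def mult_ac)
  qed
  have summT: "summable (\<lambda>k. norm (T a k))" for a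
  proof (rule summable_comparison_test)
    show "\<exists>N. \<forall>k\<ge>N. norm (norm (T a k)) \<le> Mf (norm a) * norm q ^ k"
      using Tb[of a "norm a"] by auto
    show "summable (\<lambda>k. Mf (norm a) * norm q ^ k)"
      using q by (intro summable_mult summable_geometric) auto
  qed
  define Lf where "Lf a = (\<Sum>k. T a k)" for a
  have Tsums: "T a sums Lf a" for a
    unfolding Lf_def by (rule summable_sums[OF summable_norm_cancel[OF summT]])
  have holL: "Lf holomorphic_on UNIV"
  proof (rule hol_lim[where F = "\<lambda>N a. \<Sum>k<N. T a k"])
    show "(\<lambda>a. \<Sum>k<N. T a k) holomorphic_on UNIV" for N
      unfolding T_def qpoch_def
      by (intro holomorphic_intros qpi_holo[OF q2])
    show "(\<lambda>N. \<Sum>k<N. T z k) \<longlonglongrightarrow> Lf z" for z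
      using Tsums[of z] by (simp add: sums_def)
    fix x :: complex
    show "uniformly_convergent_on (cball x 1) (\<lambda>N a. \<Sum>k<N. T a k)"
    proof (rule Weierstrass_m_test')
      show "summable (\<lambda>k. Mf (norm x + 1) * norm q ^ k)"
        using q by (intro summable_mult summable_geometric) auto
      fix k a assume "a \<in> cball x 1"
      thus "norm (T a k) \<le> Mf (norm x + 1) * norm q ^ k" by (intro Tb cball_norm)
    qed
  qed
  have nq: "qpoch_inf (- q) q \<noteq> 0" by (rule qpi_nonzero_small[OF q]) (use q in simp)
  have holR: "Rf holomorphic_on UNIV"
    unfolding Rf_def using nq by (intro holomorphic_intros qpi_holo[OF q]) auto
  have eq_small: "Lf a = Rf a" if a: "a \<in> ball 0 1" for a
  proof -
    have a1: "norm a < 1" using a by simp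
    have n1: "qpoch_inf a q \<noteq> 0" by (rule qpi_nonzero_small[OF q a1])
    have n2: "qpoch_inf (a * q ^ k) (q^2) \<noteq> 0" for k
      by (rule qpi_nonzero_small[OF q2 norm_lt1_mult[OF a1 norm_pow_le1[OF q]]])
    have "(\<lambda>k. T a k / qpoch_inf a q) sums (qpoch_inf (- b * q) q * qpoch_inf (a * b * q) q
               / (qpoch_inf (- q) q * qpoch_inf a q))"
      using small_a[OF q a1, of b] unfolding term_rel[OF q n1 n2] T_def C_def .
    hence "(\<lambda>k. qpoch_inf a q * (T a k / qpoch_inf a q)) sums (qpoch_inf a q * (qpoch_inf (- b * q) q * qpoch_inf (a * b * q) q
               / (qpoch_inf (- q) q * qpoch_inf a q)))"
      by (rule sums_mult)
    moreover have "qpoch_inf a q * (qpoch_inf (- b * q) q * qpoch_inf (a * b * q) q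
               / (qpoch_inf (- q) q * qpoch_inf a q)) = Rf a"
      unfolding Rf_def using n1 nq by (simp add: field_simps)
    ultimately have "T a sums Rf a" using n1 by simp
    thus ?thesis using Tsums[of a] sums_unique2 by blast
  qed
  have LR: "Lf a = Rf a"
    by (rule analytic_continuation_open[of "ball 0 1" UNIV Lf Rf]) (use holL holR eq_small in auto)
  have n1: "qpoch_inf a q \<noteq> 0" by (rule qpi_nonzero[OF q assms(3)])
  have n2: "qpoch_inf (a * q ^ k) (q^2) \<noteq> 0" for k
  proof (rule qpi_nonzero[OF q2])
    fix j
    have e: "a * q ^ k * (q^2) ^ j = a * q ^ (k + 2 * j)" by (simp add: power_add power_mult)
    show "a * q ^ k * (q^2) ^ j \<noteq> 1" unfolding e by (rule assms(3))
  qed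
  have "(\<lambda>k. T a k / qpoch_inf a q) sums (Rf a / qpoch_inf a q)"
    using Tsums[of a] LR by (intro sums_divide) simp
  moreover have "Rf a / qpoch_inf a q = qpoch_inf (- b * q) q * qpoch_inf (a * b * q) q
               / (qpoch_inf (- q) q * qpoch_inf a q)"
    unfolding Rf_def by (simp add: mult_ac)
  ultimately show ?thesis
    unfolding term_rel[OF q n1 n2] T_def C_def by simp
qed

end
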